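(* Let $(M,A)$ be a $d$-dimensional BUT-manifold. Let $\{B_i,B_{-i}\}$, $i=1,\ldots,d+1$, be a family of closed subsets of $M$ with $B_{-i}=A(B_i)$ and $B_i\cap B_{-i}=\emptyset$ for all $i$. If this family covers $M$, then for every set of indices $\{k_1,\ldots,k_{d+1}\}\subset\{\pm1,\pm2,\ldots,\pm(d+1)\}$ with $|k_i|=i$ for all $i$, the intersection $\bigcap_{i=1}^{d+1}B_{k_i}$ is nonempty.
   Context: A BUT (Borsuk–Ulam type) manifold is a pair $(M,A)$ where $M$ is a connected compact piecewise-linear $d$-dimensional manifold without boundary and $A:M\to M$ is a free simplicial involution ($A(A(x))=x$, $A(x)\neq x$), such that for every continuous $g:M\to\mathbb{R}^d$ there is $x\in M$ with $g(A(x))=g(x)$. *)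

theory Defs
  imports "HOL-Analysis.Analysis"
begin

text \<open>A compact polyhedron is represented as a subset M of a Euclidean space 'a
  (every compact polyhedron embeds in some R^N), triangulated by a finite
  triangulation in the sense of HOL-Analysis.\<close>

definition locally_euclidean :: "nat \<Rightarrow> 'a::euclidean_space set \<Rightarrow> bool" where
  "locally_euclidean d M \<longleftrightarrow>
     (\<forall>x\<in>M. \<exists>U. openin (top_of_set M) U \<and> x \<in> U \<and>
        subtopology (top_of_set M) U homeomorphic_space Euclidean_space d)"

definition simplicial_self_map :: "'a::euclidean_space set set \<Rightarrow> ('a \<Rightarrow> 'a) \<Rightarrow> bool" where
  "simplicial_self_map \<T> A \<longleftrightarrow>
     (\<forall>T\<in>\<T>. A ` T \<in> \<T> \<and>
        (\<forall>x\<in>T. \<forall>y\<in>T. \<forall>u::real. 0 \<le> u \<and> u \<le> 1 \<longrightarrow>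
            A ((1 - u) *\<^sub>R x + u *\<^sub>R y) = (1 - u) *\<^sub>R A x + u *\<^sub>R A y))"

definition free_involution :: "'a set \<Rightarrow> ('a \<Rightarrow> 'a) \<Rightarrow> bool" where
  "free_involution M A \<longleftrightarrow> (\<forall>x\<in>M. A x \<in> M \<and> A (A x) = x \<and> A x \<noteq> x)"

definition BU_property :: "nat \<Rightarrow> 'a::topological_space set \<Rightarrow> ('a \<Rightarrow> 'a) \<Rightarrow> bool" where
  "BU_property d M A \<longleftrightarrow>
     (\<forall>g :: nat \<Rightarrow> 'a \<Rightarrow> real. (\<forall>i<d. continuous_on M (g i)) \<longrightarrow>
        (\<exists>x\<in>M. \<forall>i<d. g i (A x) = g i x))"

definition BUT_manifold :: "nat \<Rightarrow> 'a::euclidean_space set \<Rightarrow> ('a \<Rightarrow> 'a) \<Rightarrow> bool" where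
  "BUT_manifold d M A \<longleftrightarrow>
     connected M \<and> compact M \<and> locally_euclidean d M \<and>
     (\<exists>\<T>. triangulation \<T> \<and> \<Union>\<T> = M \<and> simplicial_self_map \<T> A) \<and>
     free_involution M A \<and> BU_property d M A"

end

theory Submission
  imports Defs
begin

lemma aff_comb:
  fixes A :: "'a::real_vector \<Rightarrow> 'b::real_vector"
  assumes "finite C"
  shows "convex hull C \<subseteq> S \<Longrightarrow>
    (\<forall>x\<in>S. \<forall>y\<in>S. \<forall>u::real. 0 \<le> u \<and> u \<le> 1 \<longrightarrow>
            A ((1 - u) *\<^sub>R x + u *\<^sub>R y) = (1 - u) *\<^sub>R A x + u *\<^sub>R A y) \<Longrightarrow>
    (\<forall>v\<in>C. 0 \<le> u v) \<Longrightarrow> sum u C = 1 \<Longrightarrow>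
    A (\<Sum>v\<in>C. u v *\<^sub>R v) = (\<Sum>v\<in>C. u v *\<^sub>R A v)"
  using assms
proof (induction C arbitrary: u rule: finite_induct)
  case empty then show ?case by simp
next
  case (insert a F)
  have sF: "sum u F = 1 - u a" using insert by simp
  show ?case
  proof (cases "u a = 1")
    case True
    then have "\<forall>v\<in>F. u v = 0" using sF insert.prems(3) insert.hyps(1)
      by (subst sum_nonneg_eq_0_iff[symmetric]) auto
    then show ?thesis using insert.hyps True by simp
  next
    case False
    define t where "t = 1 - u a"
    have t: "t > 0" using False insert.prems(3) sF sum_nonneg[of F u]
      by (auto simp: t_def)
    define w where "w v = u v / t" for v
    have Fne: "F \<noteq> {}" using sF t t_def by auto
    have sw: "sum w F = 1" using sF t by (simp add: w_def t_def sum_divide_distrib[symmetric])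
    have wn: "\<forall>v\<in>F. 0 \<le> w v" using insert.prems(3) t by (auto simp: w_def)
    define y where "y = (\<Sum>v\<in>F. w v *\<^sub>R v)"
    have yF: "y \<in> convex hull F" unfolding y_def convex_hull_finite[OF insert.hyps(1)]
      using sw wn by blast
    have sub: "convex hull F \<subseteq> S" using insert.prems(1) hull_mono[of F "insert a F"] by blast
    have IH: "A y = (\<Sum>v\<in>F. w v *\<^sub>R A v)" unfolding y_def
      using insert.IH[OF sub insert.prems(2) wn sw] .
    have yS: "y \<in> S" using yF sub by auto
    have aS: "a \<in> S" using insert.prems(1) hull_subset[of "insert a F" convex] by auto
    have "(\<Sum>v\<in>insert a F. u v *\<^sub>R v) = (1 - t) *\<^sub>R a + t *\<^sub>R y"
      using insert.hyps t by (simp add: t_def y_def w_def scaleR_sum_right)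
    moreover have "(\<Sum>v\<in>insert a F. u v *\<^sub>R A v) = (1 - t) *\<^sub>R A a + t *\<^sub>R A y"
      using insert.hyps t by (simp add: t_def IH w_def scaleR_sum_right)
    moreover have "A ((1 - t) *\<^sub>R a + t *\<^sub>R y) = (1 - t) *\<^sub>R A a + t *\<^sub>R A y"
    proof -
      have "u a \<ge> 0" using insert.prems(3) by auto
      then have "0 \<le> t \<and> t \<le> 1" using t by (simp add: t_def)
      then show ?thesis using insert.prems(2) aS yS by blast
    qed
    ultimately show ?thesis by simp
  qed
qed

lemma aff_t:
  fixes A g :: "'a::euclidean_space \<Rightarrow> 'a"
  assumes C: "finite C" "T = convex hull C" and g: "linear g"
   and gv: "\<And>v. v \<in> C \<Longrightarrow> g (v - a) = A v - A a"
   and s5: "\<And>u. (\<forall>v\<in>C. 0 \<le> u v) \<Longrightarrow> sum u C = 1 \<Longrightarrow> A (\<Sum>v\<in>C. u v *\<^sub>R v) = (\<Sum>v\<in>C. u v *\<^sub>R A v)"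
   and that: "x \<in> T"
  shows "A x = g (x - a) + A a"
    proof -
      have "x \<in> convex hull C" using that C(2) by simp
      then obtain u where u: "\<forall>v\<in>C. 0 \<le> u v" "sum u C = 1" "(\<Sum>v\<in>C. u v *\<^sub>R v) = x"
        by (auto simp: convex_hull_finite[OF C(1)])
      have s1: "(\<Sum>v\<in>C. u v *\<^sub>R (v - a)) = x - a"
        using u(2,3) by (simp add: scaleR_diff_right sum_subtractf scaleR_sum_left[symmetric])
      have s2: "(\<Sum>v\<in>C. u v *\<^sub>R (A v - A a)) = (\<Sum>v\<in>C. u v *\<^sub>R A v) - A a"
        using u(2) by (simp add: scaleR_diff_right sum_subtractf scaleR_sum_left[symmetric])
      have s3: "g (\<Sum>v\<in>C. u v *\<^sub>R (v - a)) = (\<Sum>v\<in>C. u v *\<^sub>R g (v - a))"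
        using g(1) by (simp add: linear_sum linear_scale o_def)
      have s4: "(\<Sum>v\<in>C. u v *\<^sub>R g (v - a)) = (\<Sum>v\<in>C. u v *\<^sub>R (A v - A a))"
        using gv by (intro sum.cong) auto
      have "g (x - a) = A x - A a"
        using s1 s2 s3 s4 s5[OF u(1,2)] u(3) by metis
      then show ?thesis by (metis diff_add_cancel)
    qed

lemma simplex_cont:
  fixes A :: "'a::euclidean_space \<Rightarrow> 'a"
  assumes "n simplex T"
    and seg: "\<forall>x\<in>T. \<forall>y\<in>T. \<forall>u::real. 0 \<le> u \<and> u \<le> 1 \<longrightarrow>
            A ((1 - u) *\<^sub>R x + u *\<^sub>R y) = (1 - u) *\<^sub>R A x + u *\<^sub>R A y"
  shows "continuous_on T A"
proof -
  obtain C where C: "finite C" "\<not> affine_dependent C" "T = convex hull C"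
    using assms(1) unfolding simplex by blast
  show ?thesis
  proof (cases "C = {}")
    case True then show ?thesis using C by simp
  next
    case False
    then obtain a where aC: "a \<in> C" by auto
    define C' where "C' = C - {a}"
    have CC: "C = insert a C'" "a \<notin> C'" using aC by (auto simp: C'_def)
    have ind: "independent ((\<lambda>x. -a + x) ` C')"
      using C(2) affine_dependent_iff_dependent[OF CC(2)] CC(1) by metis
    obtain g where g: "linear g" "\<forall>z\<in>(\<lambda>x. -a + x) ` C'. g z = A (a + z) - A a"
      using linear_independent_extend[OF ind, of "\<lambda>z. A (a + z) - A a"] by auto
    have gv: "g (v - a) = A v - A a" if "v \<in> C" for v
    proof (cases "v = a")
      case True then show ?thesis using linear_0[OF g(1)] by simp
    next
      case False then have "v \<in> C'" using that CC by auto
      then have "g (-a + v) = A (a + (-a + v)) - A a" using g(2) by blast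
      then show ?thesis by simp
    qed
    have eq: "A x = g (x - a) + A a" if "x \<in> T" for x
      using aff_t[OF C(1) C(3) g(1) gv _ that] aff_comb[OF C(1) _ seg] C(3) by blast
    have gc: "continuous_on T g" using g(1)
      by (simp add: linear_continuous_on linear_conv_bounded_linear)
    have "continuous_on T (\<lambda>x. g x - g a + A a)"
      by (intro continuous_intros gc)
    moreover have "g x - g a + A a = g (x - a) + A a" for x
      using linear_diff[OF g(1)] by simp
    ultimately have "continuous_on T (\<lambda>x. g (x - a) + A a)" by simp
    then show ?thesis by (rule continuous_on_eq) (simp add: eq)
  qed
qed

lemma core:
  fixes d :: nat and M :: "'a::euclidean_space set" and A :: "'a \<Rightarrow> 'a" and C D :: "int \<Rightarrow> 'a set"
  defines "I \<equiv> {1..int d + 1}"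
  assumes cM: "compact M"
    and BU: "\<forall>g :: nat \<Rightarrow> 'a \<Rightarrow> real. (\<forall>i<d. continuous_on M (g i)) \<longrightarrow>
        (\<exists>x\<in>M. \<forall>i<d. g i (A x) = g i x)"
    and AM: "\<forall>x\<in>M. A x \<in> M"
    and clC: "\<forall>i\<in>I. closed (C i)"
    and CD: "\<forall>i\<in>I. \<forall>x\<in>M. x \<in> C i \<longrightarrow> A x \<in> D i"
    and DC: "\<forall>i\<in>I. \<forall>x\<in>M. x \<in> D i \<longrightarrow> A x \<in> C i"
    and disj: "\<forall>i\<in>I. C i \<inter> D i = {}"
    and cov: "\<forall>x\<in>M. \<exists>i\<in>I. x \<in> C i \<or> x \<in> D i"
    and emp: "\<forall>x\<in>M. \<exists>i\<in>I. x \<notin> C i"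
  shows False
proof -
  define e where "e i z = (if C i = {} then 1 else infdist z (C i))" for i z
  have e_nn: "0 \<le> e i z" for i z by (simp add: e_def infdist_nonneg)
  have e_cont: "continuous_on UNIV (e i)" for i
    by (cases "C i = {}") (auto simp: e_def[abs_def] intro!: continuous_intros)
  have e0: "e i z = 0 \<longleftrightarrow> z \<in> C i" if "i \<in> I" for i z
    using in_closed_iff_infdist_zero[of "C i" z] clC that by (auto simp: e_def)
  have finI: "finite I" and cardI: "card I = d + 1" unfolding I_def by auto
  have Mne: "M \<noteq> {}" using BU[rule_format, of "\<lambda>_ _. 0"] by auto
  define h where "h z = (\<Sum>i\<in>I. e i z)" for z
  have hc: "continuous_on M h" unfolding h_def
    by (intro continuous_intros continuous_on_subset[OF e_cont]) auto
  have hpos: "h z > 0" if zM: "z \<in> M" for z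
  proof -
    obtain i where "i \<in> I" "z \<notin> C i" using emp zM by auto
    then have "e i z > 0" using e0 e_nn[of i z] by force
    then show ?thesis unfolding h_def using \<open>i \<in> I\<close> finI e_nn
      by (intro sum_pos2) auto
  qed
  obtain z0 where z0: "z0 \<in> M" "\<forall>y\<in>M. h z0 \<le> h y"
    using continuous_attains_inf[OF cM Mne hc] by auto
  define \<epsilon> where "\<epsilon> = h z0 / real (d + 1)"
  have \<epsilon>pos: "\<epsilon> > 0" using hpos[OF z0(1)] by (simp add: \<epsilon>_def)
  have big: "\<exists>i\<in>I. \<epsilon> \<le> e i z" if "z \<in> M" for z
  proof (rule ccontr)
    assume "\<not> ?thesis"
    then have "\<forall>i\<in>I. e i z < \<epsilon>" by auto
    then have "h z < (\<Sum>i\<in>I. \<epsilon>)" unfolding h_def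
      using finI by (intro sum_strict_mono) (auto simp: I_def)
    also have "\<dots> = h z0" using cardI by (simp add: \<epsilon>_def)
    finally show False using z0 that by force
  qed
  define p where "p i z = max 0 (\<epsilon> - e i z)" for i z
  have pc: "continuous_on M (p i)" for i unfolding p_def[abs_def]
    by (intro continuous_intros continuous_on_subset[OF e_cont]) auto
  define g where "g j z = p (int j + 1) z - p (int d + 1) z" for j z
  have "\<forall>i<d. continuous_on M (g i)" unfolding g_def[abs_def]
    by (auto intro!: continuous_intros pc)
  then obtain x where x: "x \<in> M" "\<forall>j<d. g j (A x) = g j x" using BU by blast
  define c where "c = p (int d + 1) x - p (int d + 1) (A x)"
  have pc_eq: "p i x - p i (A x) = c" if "i \<in> I" for i
  proof -
    define j where "j = nat (i - 1)"
    have j: "i = int j + 1" "j \<le> d" using that unfolding I_def j_def by auto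
    show ?thesis
    proof (cases "j < d")
      case True then show ?thesis using x(2) j by (auto simp: g_def c_def)
    next
      case False then show ?thesis using j by (simp add: c_def)
    qed
  qed
  have Ax: "A x \<in> M" using AM x by auto
  have p_nn: "0 \<le> p i z" for i z by (simp add: p_def)
  consider "c > 0" | "c < 0" | "c = 0" by linarith
  then show False
  proof cases
    case 1
    have "\<forall>i\<in>I. e i x < \<epsilon>"
    proof
      fix i assume "i \<in> I"
      then have "p i x > 0" using pc_eq[of i] 1 p_nn[of i "A x"] by linarith
      then show "e i x < \<epsilon>" by (simp add: p_def)
    qed
    then show False using big[OF x(1)] by force
  next
    case 2
    have "\<forall>i\<in>I. e i (A x) < \<epsilon>"
    proof
      fix i assume "i \<in> I"
      then have "p i (A x) > 0" using pc_eq[of i] 2 p_nn[of i x] by linarith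
      then show "e i (A x) < \<epsilon>" by (simp add: p_def)
    qed
    then show False using big[OF Ax] by force
  next
    case 3
    obtain j where j: "j \<in> I" "x \<in> C j \<or> x \<in> D j" using cov x by auto
    have pe: "p j z = \<epsilon> \<Longrightarrow> z \<in> C j" for z
      using e0[OF j(1), of z] e_nn[of j z] \<epsilon>pos by (auto simp: p_def max_def split: if_splits)
    have ep: "z \<in> C j \<Longrightarrow> p j z = \<epsilon>" for z
      using e0[OF j(1), of z] \<epsilon>pos by (auto simp: p_def)
    have eq: "p j x = p j (A x)" using pc_eq[OF j(1)] 3 by simp
    from j(2) show False
    proof
      assume xc: "x \<in> C j"
      then have "A x \<in> C j" using pe ep eq by metis
      moreover have "A x \<in> D j" using CD j(1) x(1) xc by auto
      ultimately show False using disj j(1) by auto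
    next
      assume xd: "x \<in> D j"
      then have "A x \<in> C j" using DC j(1) x(1) by auto
      then have "x \<in> C j" using pe ep eq by metis
      then show False using disj j(1) xd by auto
    qed
  qed
qed


theorem theorem4p1:
  fixes d :: nat and M :: "'a::euclidean_space set" and A :: "'a \<Rightarrow> 'a"
    and B :: "int \<Rightarrow> 'a set"
  assumes "BUT_manifold d M A"
    and "\<forall>i\<in>{1..int d + 1}. closedin (top_of_set M) (B i)"
    and "\<forall>i\<in>{1..int d + 1}. B (-i) = A ` B i"
    and "\<forall>i\<in>{1..int d + 1}. B i \<inter> B (-i) = {}"
    and "(\<Union>i\<in>{1..int d + 1}. B i \<union> B (-i)) = M"
  shows "\<forall>k :: int \<Rightarrow> int. (\<forall>i\<in>{1..int d + 1}. \<bar>k i\<bar> = i) \<longrightarrow>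
           (\<Inter>i\<in>{1..int d + 1}. B (k i)) \<noteq> {}"
proof (intro allI impI)
  fix k :: "int \<Rightarrow> int"
  assume kI: "\<forall>i\<in>{1..int d + 1}. \<bar>k i\<bar> = i"
  define I where "I = {1..int d + 1}"
  obtain \<T> where cM: "compact M" and tri: "triangulation \<T>" and UT: "\<Union>\<T> = M"
    and ss: "simplicial_self_map \<T> A" and fi: "free_involution M A" and bu: "BU_property d M A"
    using assms(1) unfolding BUT_manifold_def by blast
  have AM: "\<forall>x\<in>M. A x \<in> M" and AA: "\<forall>x\<in>M. A (A x) = x"
    using fi unfolding free_involution_def by auto
  have contA: "continuous_on M A"
  proof -
    have "continuous_on (\<Union>T\<in>\<T>. T) A"
    proof (rule continuous_on_closed_Union)
      show "finite \<T>" using tri unfolding triangulation_def by blast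
    next
      fix T assume T: "T \<in> \<T>"
      then obtain n where n: "n simplex T" using tri unfolding triangulation_def by blast
      then obtain C where "finite C" "T = convex hull C" unfolding simplex by blast
      then show "closed T" by (simp add: compact_imp_closed finite_imp_compact compact_convex_hull)
      show "continuous_on T A"
        using simplex_cont[OF n] ss T unfolding simplicial_self_map_def by blast
    qed
    then show ?thesis using UT by simp
  qed
  have BM: "\<forall>i\<in>I. B i \<subseteq> M" using assms(2) unfolding I_def by (auto dest: closedin_imp_subset)
  have Bc: "\<forall>i\<in>I. compact (B i)" using assms(2) cM closedin_compact unfolding I_def by blast
  have Bnc: "\<forall>i\<in>I. compact (B (-i))"
  proof
    fix i assume i: "i \<in> I"
    have "compact (A ` B i)"
      using Bc i BM continuous_on_subset[OF contA] by (intro compact_continuous_image) auto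
    then show "compact (B (-i))" using assms(3) i unfolding I_def by simp
  qed
  have e1: "x \<in> B (-i) \<longleftrightarrow> A x \<in> B i" if iI: "i \<in> I" and xM: "x \<in> M" for i x
  proof
    assume "x \<in> B (-i)"
    then obtain y where "y \<in> B i" "x = A y" using assms(3) iI unfolding I_def by auto
    then show "A x \<in> B i" using AA BM iI by (metis subsetD)
  next
    assume "A x \<in> B i"
    then have "A (A x) \<in> B (-i)" using assms(3) iI unfolding I_def by auto
    then show "x \<in> B (-i)" using AA xM by auto
  qed
  have e2: "x \<in> B i \<longleftrightarrow> A x \<in> B (-i)" if "i \<in> I" "x \<in> M" for i x
  proof -
    have "A x \<in> M" using AM that by auto
    then have "A x \<in> B (-i) \<longleftrightarrow> A (A x) \<in> B i" using e1 that(1) by blast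
    then show ?thesis using AA that by auto
  qed
  have ks: "k i = i \<or> k i = -i" if "i \<in> I" for i
  proof -
    have "\<bar>k i\<bar> = i" using kI that unfolding I_def by blast
    then show ?thesis by (auto simp: abs_if split: if_splits)
  qed
  define C where "C i = B (k i)" for i
  define D where "D i = B (- k i)" for i
  show "(\<Inter>i\<in>{1..int d + 1}. B (k i)) \<noteq> {}"
  proof
    assume emp0: "(\<Inter>i\<in>{1..int d + 1}. B (k i)) = {}"
    show False
    proof (rule core[of M d A C D])
      show "compact M" by fact
      show "\<forall>g :: nat \<Rightarrow> 'a \<Rightarrow> real. (\<forall>i<d. continuous_on M (g i)) \<longrightarrow>
        (\<exists>x\<in>M. \<forall>i<d. g i (A x) = g i x)" using bu unfolding BU_property_def by blast
      show "\<forall>x\<in>M. A x \<in> M" by fact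
      show "\<forall>i\<in>{1..int d + 1}. closed (C i)"
        using ks Bc Bnc unfolding C_def I_def by (metis compact_imp_closed)
      show "\<forall>i\<in>{1..int d + 1}. \<forall>x\<in>M. x \<in> C i \<longrightarrow> A x \<in> D i"
        using ks e1 e2 unfolding C_def D_def I_def by (metis minus_minus)
      show "\<forall>i\<in>{1..int d + 1}. \<forall>x\<in>M. x \<in> D i \<longrightarrow> A x \<in> C i"
        using ks e1 e2 unfolding C_def D_def I_def by (metis minus_minus)
      show "\<forall>i\<in>{1..int d + 1}. C i \<inter> D i = {}"
        using ks assms(4) unfolding C_def D_def I_def by (metis inf_commute minus_minus)
      show "\<forall>x\<in>M. \<exists>i\<in>{1..int d + 1}. x \<in> C i \<or> x \<in> D i"
      proof
        fix x assume "x \<in> M"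
        then obtain i where i: "i \<in> I" "x \<in> B i \<or> x \<in> B (-i)" using assms(5) unfolding I_def by blast
        then show "\<exists>i\<in>{1..int d + 1}. x \<in> C i \<or> x \<in> D i"
          using ks[OF i(1)] unfolding C_def D_def I_def by (metis minus_minus)
      qed
      show "\<forall>x\<in>M. \<exists>i\<in>{1..int d + 1}. x \<notin> C i" using emp0 unfolding C_def by blast
    qed
  qed
qed

end
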